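(* The one-dimensional subalgebras of ${\rm S}_1$ are exactly $\langle e_1\rangle$, $\langle e_2\rangle$ and $\langle\alpha e_2+e_3\rangle$ ($\alpha\in\mathbb{C}$). Up to automorphisms of ${\rm S}_1$, every one-dimensional subalgebra is equivalent to $\langle e_1\rangle$ or $\langle e_2\rangle$.
   Context: ${\rm S}_1$ is the complex algebra with basis $e_1,e_2,e_3$ whose only nonzero products of basis elements are $e_1e_i=e_ie_1=e_i$ ($i=1,2,3$), with involution $\overline{e_1}=e_1$, $\overline{e_2}=-e_2$, $\overline{e_3}=-e_3$ (which plays no role here). A subalgebra is a linear subspace closed under multiplication (it need not contain $e_1$). Equivalence up to automorphisms means one is mapped onto the other by an algebra automorphism. $\langle S\rangle$ denotes linear span. *)

theory Defs
  imports "HOL-Analysis.Analysis"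
begin

text \<open>The algebra S_1: elements are coordinate triples (x1,x2,x3) meaning
  x1 e1 + x2 e2 + x3 e3, as a complex vector space with componentwise
  addition (from HOL-Library.Product_Plus) and complex scalar multiplication s1_scale.\<close>

type_synonym S1 = "complex \<times> complex \<times> complex"

definition s1_scale :: "complex \<Rightarrow> S1 \<Rightarrow> S1" where
  "s1_scale c x = (c * fst x, c * fst (snd x), c * snd (snd x))"

definition e1 :: S1 where "e1 = (1, 0, 0)"
definition e2 :: S1 where "e2 = (0, 1, 0)"
definition e3 :: S1 where "e3 = (0, 0, 1)"

text \<open>Bilinear product with e1 e_i = e_i e1 = e_i and all other basis products zero.\<close>
definition s1_mult :: "S1 \<Rightarrow> S1 \<Rightarrow> S1" where
  "s1_mult x y = (fst x * fst y,
                  fst x * fst (snd y) + fst (snd x) * fst y,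
                  fst x * snd (snd y) + snd (snd x) * fst y)"

lemma s1_vector_space: "vector_space s1_scale"
  by unfold_locales (auto simp: s1_scale_def algebra_simps)

definition s1_span :: "S1 set \<Rightarrow> S1 set" where
  "s1_span S = module.span s1_scale S"

definition s1_dim :: "S1 set \<Rightarrow> nat" where
  "s1_dim V = vector_space.dim s1_scale V"

text \<open>Subalgebra: linear subspace closed under multiplication (need not contain e1).\<close>
definition s1_subalgebra :: "S1 set \<Rightarrow> bool" where
  "s1_subalgebra V \<longleftrightarrow> module.subspace s1_scale V \<and> (\<forall>x\<in>V. \<forall>y\<in>V. s1_mult x y \<in> V)"

definition s1_automorphism :: "(S1 \<Rightarrow> S1) \<Rightarrow> bool" where
  "s1_automorphism f \<longleftrightarrow> Vector_Spaces.linear s1_scale s1_scale f \<and> bij f \<and>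
     (\<forall>x y. f (s1_mult x y) = s1_mult (f x) (f y))"

end

theory Submission
  imports Defs
begin

interpretation s1: vector_space s1_scale by (rule s1_vector_space)

lemma span1: "s1_span {v} = range (\<lambda>k. s1_scale k v)"
  unfolding s1_span_def by (rule s1.span_singleton)

lemma dim1_iff: "(module.subspace s1_scale V \<and> s1_dim V = 1) \<longleftrightarrow> (\<exists>v. v \<noteq> 0 \<and> V = s1_span {v})"
proof
  assume H: "module.subspace s1_scale V \<and> s1_dim V = 1"
  obtain B where B: "B \<subseteq> V" "s1.independent B" "V \<subseteq> s1.span B" "card B = s1.dim V"
    using s1.basis_exists by blast
  with H have "card B = 1" by (simp add: s1_dim_def)
  then obtain v where v: "B = {v}" by (auto simp: card_Suc_eq)
  with B have "v \<noteq> 0" using s1.independent_insert s1.span_empty by auto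
  moreover have "V = s1_span {v}"
    using B v H s1.span_minimal unfolding s1_span_def by blast
  ultimately show "\<exists>v. v \<noteq> 0 \<and> V = s1_span {v}" by blast
next
  assume "\<exists>v. v \<noteq> 0 \<and> V = s1_span {v}"
  then obtain v where v: "v \<noteq> 0" "V = s1_span {v}" by blast
  have "s1.independent {v}" using v s1.independent_insert s1.span_empty by auto
  then have "s1.dim (s1.span {v}) = 1" using s1.dim_span_eq_card_independent by simp
  then show "module.subspace s1_scale V \<and> s1_dim V = 1"
    using v s1.subspace_span by (simp add: s1_dim_def s1_span_def)
qed

lemma mult_scale: "s1_mult (s1_scale k v) (s1_scale l v) = s1_scale (k*l) (s1_mult v v)"
  by (simp add: s1_mult_def s1_scale_def algebra_simps)

lemma subalg_iff: "(s1_subalgebra V \<and> s1_dim V = 1) \<longleftrightarrow>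
   (\<exists>v. v \<noteq> 0 \<and> V = s1_span {v} \<and> (\<exists>k. s1_mult v v = s1_scale k v))"
proof
  assume H: "s1_subalgebra V \<and> s1_dim V = 1"
  then obtain v where v: "v \<noteq> 0" "V = s1_span {v}" using dim1_iff s1_subalgebra_def by blast
  have "v \<in> V" using v span1 s1.scale_one by (metis rangeI)
  then have "s1_mult v v \<in> V" using H s1_subalgebra_def by blast
  then obtain k where "s1_mult v v = s1_scale k v" using v(2) unfolding span1 by blast
  then show "\<exists>v. v \<noteq> 0 \<and> V = s1_span {v} \<and> (\<exists>k. s1_mult v v = s1_scale k v)"
    using v by blast
next
  assume "\<exists>v. v \<noteq> 0 \<and> V = s1_span {v} \<and> (\<exists>k. s1_mult v v = s1_scale k v)"
  then obtain v k where v: "v \<noteq> 0" "V = s1_span {v}" "s1_mult v v = s1_scale k v" by blast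
  have "\<forall>x\<in>V. \<forall>y\<in>V. s1_mult x y \<in> V"
    using v by (auto simp: span1 mult_scale s1.scale_scale)
  then show "s1_subalgebra V \<and> s1_dim V = 1"
    using dim1_iff v unfolding s1_subalgebra_def by blast
qed

lemma span_scale: "c \<noteq> 0 \<Longrightarrow> s1_span {s1_scale c v} = s1_span {v}"
  unfolding span1
proof (auto simp: s1.scale_scale)
  fix k assume "c \<noteq> 0"
  then have "s1_scale k v = s1_scale (k/c * c) v" by simp
  then show "s1_scale k v \<in> range (\<lambda>k. s1_scale (k * c) v)" by blast
qed

lemma s1_eq: "(x::S1) = (fst x, fst (snd x), snd (snd x))" by simp

lemma classify: assumes "v \<noteq> 0" "s1_mult v v = s1_scale k v"
  shows "s1_span {v} = s1_span {e1} \<or> s1_span {v} = s1_span {e2} \<or>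
             (\<exists>\<alpha>::complex. s1_span {v} = s1_span {s1_scale \<alpha> e2 + e3})"
proof -
  obtain a b c where abc: "v = (a,b,c)" by (cases v) auto
  have eqs: "a*a = k*a" "2*a*b = k*b" "2*a*c = k*c"
    using assms(2) by (auto simp: abc s1_mult_def s1_scale_def algebra_simps)
  show ?thesis
  proof (cases "a = 0")
    case False
    then have "k = a" using eqs(1) by (metis mult_right_cancel)
    then have "b = 0" "c = 0" using eqs False by auto
    then have "v = s1_scale a e1" by (simp add: abc s1_scale_def e1_def)
    then show ?thesis using span_scale False by simp
  next
    case a0: True
    show ?thesis
    proof (cases "c = 0")
      case True
      then have "b \<noteq> 0" using a0 assms(1) abc by (auto simp: zero_prod_def)
      have "v = s1_scale b e2" using a0 True by (simp add: abc s1_scale_def e2_def)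
      then show ?thesis using span_scale \<open>b \<noteq> 0\<close> by simp
    next
      case False
      have "v = s1_scale c (s1_scale (b/c) e2 + e3)" using a0 False
        by (simp add: abc s1_scale_def e2_def e3_def)
      then show ?thesis using span_scale False by metis
    qed
  qed
qed

definition fa :: "complex \<Rightarrow> S1 \<Rightarrow> S1" where
  "fa \<alpha> x = (fst x, snd (snd x), fst (snd x) - \<alpha> * snd (snd x))"

lemma fa_aut: "s1_automorphism (fa \<alpha>)"
  unfolding s1_automorphism_def
proof (intro conjI allI)
  show "Vector_Spaces.linear s1_scale s1_scale (fa \<alpha>)"
    unfolding Vector_Spaces.linear_iff using s1_vector_space
    by (auto simp: fa_def s1_scale_def algebra_simps prod_eq_iff)
  show "bij (fa \<alpha>)"
  proof (rule bij_betwI')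
    fix x y show "(fa \<alpha> x = fa \<alpha> y) = (x = y)"
      by (cases x; cases y) (auto simp: fa_def)
  next
    fix y :: S1
    obtain a b c where "y = (a,b,c)" by (cases y) auto
    then have "y = fa \<alpha> (a, c + \<alpha> * b, b)" by (simp add: fa_def)
    then show "\<exists>x\<in>UNIV. y = fa \<alpha> x" by blast
  qed simp
  fix x y show "fa \<alpha> (s1_mult x y) = s1_mult (fa \<alpha> x) (fa \<alpha> y)"
    by (simp add: fa_def s1_mult_def algebra_simps)
qed

lemma id_aut: "s1_automorphism id"
  unfolding s1_automorphism_def Vector_Spaces.linear_iff using s1_vector_space bij_id by auto

lemma fa_img: "fa \<alpha> ` s1_span {s1_scale \<alpha> e2 + e3} = s1_span {e2}"
proof -
  have "fa \<alpha> (s1_scale k (s1_scale \<alpha> e2 + e3)) = s1_scale k e2" for k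
    by (simp add: fa_def s1_scale_def e2_def e3_def)
  then show ?thesis unfolding span1 image_image by simp
qed

theorem mainTheorem14:
  shows "(\<forall>V. (s1_subalgebra V \<and> s1_dim V = 1) \<longleftrightarrow>
            (V = s1_span {e1} \<or> V = s1_span {e2} \<or>
             (\<exists>\<alpha>::complex. V = s1_span {s1_scale \<alpha> e2 + e3})))
       \<and> (\<forall>V. s1_subalgebra V \<and> s1_dim V = 1 \<longrightarrow>
            (\<exists>f. s1_automorphism f \<and> (f ` V = s1_span {e1} \<or> f ` V = s1_span {e2})))"
proof -
  have A: "(s1_subalgebra V \<and> s1_dim V = 1) \<longleftrightarrow>
            (V = s1_span {e1} \<or> V = s1_span {e2} \<or>
             (\<exists>\<alpha>::complex. V = s1_span {s1_scale \<alpha> e2 + e3}))" for V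
  proof
    assume "s1_subalgebra V \<and> s1_dim V = 1"
    then show "V = s1_span {e1} \<or> V = s1_span {e2} \<or>
             (\<exists>\<alpha>::complex. V = s1_span {s1_scale \<alpha> e2 + e3})"
      using subalg_iff classify by metis
  next
    assume H: "V = s1_span {e1} \<or> V = s1_span {e2} \<or>
             (\<exists>\<alpha>::complex. V = s1_span {s1_scale \<alpha> e2 + e3})"
    have 1: "e1 \<noteq> 0 \<and> s1_mult e1 e1 = s1_scale 1 e1"
      by (simp add: e1_def s1_mult_def s1_scale_def zero_prod_def)
    have 2: "e2 \<noteq> 0 \<and> s1_mult e2 e2 = s1_scale 0 e2"
      by (simp add: e2_def s1_mult_def s1_scale_def zero_prod_def)
    have 3: "s1_scale \<alpha> e2 + e3 \<noteq> 0 \<and> s1_mult (s1_scale \<alpha> e2 + e3) (s1_scale \<alpha> e2 + e3) = s1_scale 0 (s1_scale \<alpha> e2 + e3)" for \<alpha>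
      by (simp add: e2_def e3_def s1_mult_def s1_scale_def zero_prod_def)
    show "s1_subalgebra V \<and> s1_dim V = 1"
      unfolding subalg_iff using H 1 2 3 by blast
  qed
  have B: "\<exists>f. s1_automorphism f \<and> (f ` V = s1_span {e1} \<or> f ` V = s1_span {e2})"
    if "s1_subalgebra V \<and> s1_dim V = 1" for V
  proof -
    from that A consider "V = s1_span {e1}" | "V = s1_span {e2}" |
       \<alpha> where "V = s1_span {s1_scale \<alpha> e2 + e3}" by blast
    then show ?thesis
    proof cases
      case 1 then show ?thesis using id_aut by auto
    next
      case 2 then show ?thesis using id_aut by auto
    next
      case 3 then show ?thesis using fa_aut fa_img by blast
    qed
  qed
  show ?thesis using A B by blast
qed

end
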